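(* Let Assumptions 1 and 2 hold and $\eta>0$. Define $H:\mathbb{R}^N_{++}\to\mathbb{R}^N_{++}$ by $H(y)=\nabla_\theta\big(e^{\varphi_1(\theta)}\big)\big|_{\theta=\log y}$ (componentwise logarithm), and assume $H$ is a bijection of $\mathbb{R}^N_{++}$ onto itself with inverse $\Phi=H^{-1}$. Let $u_1,\dots,u_T\in\mathbb{R}^N$ be arbitrary and let $x_t=\nabla\varphi_\eta(\theta_{t-1})$, $t=1,\dots,T$, be the SSA (equivalently FTRL) choices. Then $x_t\in\mathbb{R}^N_{++}$ and, writing $\alpha(x)=\log\Phi(x)$ (componentwise), for all $t\ge1$ with $t+1\le T$ and all $j\in A$, $$x_{t+1,j}=\frac{H_j\big(e^{u_t/\eta+\alpha(x_t)}\big)}{\sum_{i=1}^N H_i\big(e^{u_t/\eta+\alpha(x_t)}\big)},$$ where $e^{v}$ denotes the componentwise exponential of a vector $v$.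
   Context: Let $N\ge 2$, $A=\{1,\dots,N\}$, and $\Delta_N=\{x\in\mathbb{R}^N: x_i\ge 0,\ \sum_i x_i=1\}$. Let $\epsilon=(\epsilon_1,\dots,\epsilon_N)$ be a random vector satisfying Assumption 1: each $\epsilon_i$ is integrable with $\mathbb{E}[\epsilon_i]=0$, and the law of $\epsilon$ is absolutely continuous with respect to Lebesgue measure on $\mathbb{R}^N$ with support all of $\mathbb{R}^N$. For $\eta>0$ the social surplus function is $\varphi_\eta(\theta)=\mathbb{E}[\max_{j\in A}(\theta_j+\eta\epsilon_j)]$, $\theta\in\mathbb{R}^N$; thus $\varphi_\eta(\theta)=\eta\varphi_1(\theta/\eta)$. $\varphi_\eta$ is convex and differentiable with $\nabla\varphi_\eta(\theta)\in\Delta_N$. Assumption 2: $\varphi_1$ is twice continuously differentiable and there is a constant $L>0$ with $2\,\mathrm{tr}(\nabla^2\varphi_1(\theta))\le L$ for all $\theta\in\mathbb{R}^N$. Set $\theta_0=0$, $\theta_t=\sum_{s=1}^tu_s$; $\mathbb{R}^N_{++}$ is the set of vectors with all coordinates strictly positive. *)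

theory Defs
  imports "HOL-Analysis.Analysis" "HOL-Probability.Probability"
begin

definition grad :: "(real^'n \<Rightarrow> real) \<Rightarrow> real^'n \<Rightarrow> real^'n" where
  "grad f x = (\<chi> i. frechet_derivative f (at x) (axis i 1))"

definition hess :: "(real^'n \<Rightarrow> real) \<Rightarrow> real^'n \<Rightarrow> real^'n^'n" where
  "hess f x = (\<chi> i j. frechet_derivative (grad f) (at x) (axis j 1) $ i)"

definition C2 :: "(real^'n \<Rightarrow> real) \<Rightarrow> bool" where
  "C2 f \<longleftrightarrow> (\<forall>x. f differentiable (at x)) \<and> (\<forall>x. grad f differentiable (at x))
      \<and> continuous_on UNIV (hess f)"

text \<open>Social surplus function, M is the law of the noise vector epsilon.\<close>
definition ssf :: "(real^'n::finite) measure \<Rightarrow> real \<Rightarrow> real^'n \<Rightarrow> real" where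
  "ssf M \<eta> \<theta> = (\<integral>e. (MAX j. \<theta> $ j + \<eta> * e $ j) \<partial>M)"

definition pos_orthant :: "(real^'n) set" where
  "pos_orthant = {y. \<forall>i. 0 < y $ i}"

definition vexp :: "real^'n \<Rightarrow> real^'n" where
  "vexp v = (\<chi> i. exp (v $ i))"

definition vln :: "real^'n \<Rightarrow> real^'n" where
  "vln v = (\<chi> i. ln (v $ i))"

definition assumption1 :: "(real^'n::finite) measure \<Rightarrow> bool" where
  "assumption1 M \<longleftrightarrow> prob_space M \<and> sets M = sets borel
     \<and> (\<forall>i. integrable M (\<lambda>e. e $ i) \<and> (\<integral>e. e $ i \<partial>M) = 0)
     \<and> absolutely_continuous lborel M
     \<and> (\<forall>U. open U \<and> U \<noteq> {} \<longrightarrow> emeasure M U > 0)"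

definition assumption2 :: "(real^'n::finite) measure \<Rightarrow> real \<Rightarrow> bool" where
  "assumption2 M L \<longleftrightarrow> L > 0 \<and> C2 (ssf M 1) \<and> (\<forall>\<theta>. 2 * trace (hess (ssf M 1) \<theta>) \<le> L)"

end

theory Submission
  imports Defs
begin

definition ones :: "real^'n" where "ones = (\<chi> i. 1)"

lemma grad_shift:
  fixes f :: "real^'n \<Rightarrow> real"
  assumes diff: "\<And>x. f differentiable (at x)"
    and sh: "\<And>x c. f (x + c *\<^sub>R ones) = f x + c"
  shows "grad f (x + c *\<^sub>R ones) = grad f x"
proof -
  have d1: "(f has_derivative frechet_derivative f (at (x + c *\<^sub>R ones))) (at (x + c *\<^sub>R ones))"
    using diff frechet_derivative_works by blast
  have tr: "((\<lambda>y. y + c *\<^sub>R ones) has_derivative (\<lambda>h. h)) (at x)"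
    by (intro derivative_eq_intros) auto
  have "((\<lambda>y. f (y + c *\<^sub>R ones)) has_derivative frechet_derivative f (at (x + c *\<^sub>R ones))) (at x)"
    using has_derivative_compose[OF tr d1] by simp
  moreover have "((\<lambda>y. f (y + c *\<^sub>R ones)) has_derivative frechet_derivative f (at x)) (at x)"
    unfolding sh using diff frechet_derivative_works has_derivative_add_const by blast
  ultimately have "frechet_derivative f (at (x + c *\<^sub>R ones)) = frechet_derivative f (at x)"
    using has_derivative_unique by blast
  then show ?thesis unfolding grad_def by simp
qed

lemma grad_sum:
  fixes f :: "real^'n \<Rightarrow> real"
  assumes diff: "\<And>x. f differentiable (at x)"
    and sh: "\<And>x c. f (x + c *\<^sub>R ones) = f x + c"
  shows "(\<Sum>i\<in>UNIV. grad f x $ i) = 1"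
proof -
  let ?D = "frechet_derivative f (at x)"
  have d0: "(f has_derivative ?D) (at x)"
    using diff frechet_derivative_works by blast
  then have d1: "(f has_derivative ?D) (at (x + 0 *\<^sub>R ones))"
    by simp
  have tr: "((\<lambda>t::real. x + t *\<^sub>R ones) has_derivative (\<lambda>h. h *\<^sub>R ones)) (at 0)"
    by (intro derivative_eq_intros) auto
  have "((\<lambda>t. f (x + t *\<^sub>R ones)) has_derivative (\<lambda>h. ?D (h *\<^sub>R ones))) (at 0)"
    using has_derivative_compose[OF tr d1] by simp
  moreover have "((\<lambda>t. f (x + t *\<^sub>R ones)) has_derivative (\<lambda>h. h)) (at 0)"
    unfolding sh by (intro derivative_eq_intros) auto
  ultimately have "(\<lambda>h. ?D (h *\<^sub>R ones)) = (\<lambda>h. h)"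
    using has_derivative_unique by blast
  then have one: "?D ones = 1" by (metis scaleR_one)
  have lin: "linear ?D"
    using d1 has_derivative_linear by auto
  have e: "ones = (\<Sum>i\<in>UNIV. axis i (1::real))"
    by (simp add: ones_def vec_eq_iff axis_def)
  have "?D ones = (\<Sum>i\<in>UNIV. ?D (axis i 1))"
    by (subst e) (rule linear_sum[OF lin])
  then show ?thesis unfolding grad_def using one by simp
qed

lemma grad_scale:
  fixes f :: "real^'n \<Rightarrow> real"
  assumes diff: "\<And>x. f differentiable (at x)" and eta: "\<eta> > 0"
  shows "grad (\<lambda>\<theta>. \<eta> * f ((1/\<eta>) *\<^sub>R \<theta>)) x = grad f ((1/\<eta>) *\<^sub>R x)"
proof -
  let ?D = "frechet_derivative f (at ((1/\<eta>) *\<^sub>R x))"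
  have d1: "(f has_derivative ?D) (at ((1/\<eta>) *\<^sub>R x))"
    using diff frechet_derivative_works by blast
  have lin: "linear ?D"
    using d1 has_derivative_linear by auto
  have tr: "((\<lambda>y. (1/\<eta>) *\<^sub>R y) has_derivative (\<lambda>h. (1/\<eta>) *\<^sub>R h)) (at x)"
    by (intro derivative_eq_intros) auto
  have "((\<lambda>y. f ((1/\<eta>) *\<^sub>R y)) has_derivative (\<lambda>h. ?D ((1/\<eta>) *\<^sub>R h))) (at x)"
    using has_derivative_compose[OF tr d1] by simp
  then have "((\<lambda>y. \<eta> * f ((1/\<eta>) *\<^sub>R y)) has_derivative (\<lambda>h. \<eta> * ?D ((1/\<eta>) *\<^sub>R h))) (at x)"
    by (intro derivative_eq_intros) auto
  moreover have "(\<lambda>h. \<eta> * ?D ((1/\<eta>) *\<^sub>R h)) = ?D"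
    using eta by (auto simp: linear_scale[OF lin])
  ultimately have "frechet_derivative (\<lambda>y. \<eta> * f ((1/\<eta>) *\<^sub>R y)) (at x) = ?D"
    using frechet_derivative_at by metis
  then show ?thesis unfolding grad_def by simp
qed

lemma grad_exp:
  fixes f :: "real^'n \<Rightarrow> real"
  assumes diff: "\<And>x. f differentiable (at x)"
  shows "grad (\<lambda>\<theta>. exp (f \<theta>)) x = exp (f x) *\<^sub>R grad f x"
proof -
  let ?D = "frechet_derivative f (at x)"
  have d1: "(f has_derivative ?D) (at x)"
    using diff frechet_derivative_works by blast
  have "((\<lambda>y. exp (f y)) has_derivative (\<lambda>h. exp (f x) * ?D h)) (at x)"
    using d1 by (auto intro!: derivative_eq_intros)
  then have "frechet_derivative (\<lambda>y. exp (f y)) (at x) = (\<lambda>h. exp (f x) * ?D h)"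
    using frechet_derivative_at by metis
  then show ?thesis unfolding grad_def by (simp add: vec_eq_iff)
qed

lemma Max_scale:
  fixes g :: "'n::finite \<Rightarrow> real"
  assumes "\<eta> > 0"
  shows "(MAX j. \<eta> * g j) = \<eta> * (MAX j. g j)"
proof -
  have "mono ((*) \<eta>)" using assms by (auto simp: mono_def)
  then have "\<eta> * Max (range g) = Max ((*) \<eta> ` range g)"
    by (rule mono_Max_commute) auto
  then show ?thesis by (simp add: image_image)
qed

lemma ssf_scale:
  assumes "\<eta> > 0"
  shows "ssf M \<eta> \<theta> = \<eta> * ssf M 1 ((1/\<eta>) *\<^sub>R \<theta>)"
proof -
  have "\<And>e. (MAX j. \<theta> $ j + \<eta> * e $ j) = \<eta> * (MAX j. ((1/\<eta>) *\<^sub>R \<theta>) $ j + 1 * e $ j)"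
  proof -
    fix e :: "real^'a"
    have "(MAX j. \<theta> $ j + \<eta> * e $ j) = (MAX j. \<eta> * (((1/\<eta>) *\<^sub>R \<theta>) $ j + 1 * e $ j))"
      using assms by (simp add: algebra_simps)
    then show "?thesis e" using Max_scale[OF assms] by simp
  qed
  then show ?thesis unfolding ssf_def by simp
qed

lemma ssf_shift:
  assumes "assumption1 M"
  shows "ssf M 1 (x + c *\<^sub>R ones) = ssf M 1 x + c"
proof -
  have ps: "prob_space M" and int: "\<And>i. integrable M (\<lambda>e. e $ i)"
    using assms unfolding assumption1_def by auto
  have eq: "\<And>e. (MAX j. (x + c *\<^sub>R ones) $ j + 1 * e $ j) = (MAX j. x $ j + 1 * e $ j) + c"
    subgoal for e
    using Max_add_commute[of "UNIV::'a set" "\<lambda>j. x $ j + 1 * e $ j" c]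
    by (simp add: ones_def algebra_simps) done
  have meas: "(\<lambda>e. MAX j. x $ j + 1 * e $ j) \<in> borel_measurable M"
    using int by (intro borel_measurable_Max) auto
  have ib: "integrable M (\<lambda>e. \<Sum>j\<in>UNIV. \<bar>x $ j + 1 * e $ j\<bar>)"
  proof -
    interpret prob_space M by (rule ps)
    show ?thesis
    proof (rule Bochner_Integration.integrable_sum)
      fix j :: 'a
      have "integrable M (\<lambda>e. x $ j + 1 * e $ j)"
        using int[of j] by (intro Bochner_Integration.integrable_add) auto
      then show "integrable M (\<lambda>e. \<bar>x $ j + 1 * e $ j\<bar>)"
        by (rule Bochner_Integration.integrable_abs)
    qed
  qed
  have bnd: "\<And>e. norm (MAX j. x $ j + 1 * e $ j) \<le> norm (\<Sum>j\<in>UNIV. \<bar>x $ j + 1 * e $ j\<bar>)"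
  proof -
    fix e :: "real^'a"
    have "(MAX j. x $ j + 1 * e $ j) \<in> range (\<lambda>j. x $ j + 1 * e $ j)"
      by (rule Max_in) auto
    then obtain j0 where j0: "(MAX j. x $ j + 1 * e $ j) = x $ j0 + 1 * e $ j0"
      by blast
    have "\<bar>x $ j0 + 1 * e $ j0\<bar> \<le> (\<Sum>j\<in>UNIV. \<bar>x $ j + 1 * e $ j\<bar>)"
      by (rule member_le_sum) auto
    then show "?thesis e" unfolding j0 by (simp add: sum_nonneg)
  qed
  have im: "integrable M (\<lambda>e. MAX j. x $ j + 1 * e $ j)"
    using ib meas by (rule Bochner_Integration.integrable_bound) (use bnd in auto)
  have "ssf M 1 (x + c *\<^sub>R ones) = (\<integral>e. (MAX j. x $ j + 1 * e $ j) + c \<partial>M)"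
    unfolding ssf_def eq ..
  also have "\<dots> = ssf M 1 x + (\<integral>e. c \<partial>M)"
    unfolding ssf_def
  proof (rule Bochner_Integration.integral_add[OF im])
    interpret prob_space M by (rule ps)
    show "integrable M (\<lambda>e. c)" by simp
  qed
  also have "(\<integral>e. c \<partial>M) = c"
  proof -
    interpret prob_space M by (rule ps)
    show ?thesis by (simp add: prob_space.prob_space[OF ps])
  qed
  finally show ?thesis .
qed

theorem proposition4:
  fixes M :: "(real^'n::finite) measure" and L \<eta> :: real
    and u :: "nat \<Rightarrow> real^'n" and T :: nat
    and H \<Phi> \<alpha> :: "real^'n \<Rightarrow> real^'n"
    and \<theta>s x :: "nat \<Rightarrow> real^'n"
  assumes "CARD('n) \<ge> 2"
    and "assumption1 M" and "assumption2 M L" and "\<eta> > 0"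
    and H_def: "H = (\<lambda>y. grad (\<lambda>\<theta>. exp (ssf M 1 \<theta>)) (vln y))"
    and "bij_betw H pos_orthant pos_orthant"
    and \<Phi>_def: "\<Phi> = the_inv_into pos_orthant H"
    and \<theta>s_def: "\<theta>s = (\<lambda>t. \<Sum>s=1..t. u s)"
    and x_def: "x = (\<lambda>t. grad (ssf M \<eta>) (\<theta>s (t - 1)))"
    and \<alpha>_def: "\<alpha> = (\<lambda>y. vln (\<Phi> y))"
  shows "(\<forall>t\<in>{1..T}. x t \<in> pos_orthant) \<and>
    (\<forall>t. 1 \<le> t \<and> t + 1 \<le> T \<longrightarrow> (\<forall>j.
       x (t + 1) $ j = H (vexp ((1 / \<eta>) *\<^sub>R u t + \<alpha> (x t))) $ j
         / (\<Sum>i\<in>UNIV. H (vexp ((1 / \<eta>) *\<^sub>R u t + \<alpha> (x t))) $ i)))"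
proof -
  define f where "f = ssf M 1"
  have A1: "assumption1 M" using assms(2) .
  have diff: "\<And>x. f differentiable (at x)"
    using assms(3) unfolding assumption2_def C2_def f_def by blast
  have sh: "\<And>x c. f (x + c *\<^sub>R ones) = f x + c"
    unfolding f_def using ssf_shift[OF A1] by blast
  have gsh: "\<And>x c. grad f (x + c *\<^sub>R ones) = grad f x"
    using grad_shift[OF diff sh] by blast
  have gsum: "\<And>x. (\<Sum>i\<in>UNIV. grad f x $ i) = 1"
    using grad_sum[OF diff sh] by blast
  have ssfeta: "ssf M \<eta> = (\<lambda>\<theta>. \<eta> * f ((1/\<eta>) *\<^sub>R \<theta>))"
    unfolding f_def using ssf_scale[OF assms(4)] by blast
  have xeq: "\<And>t. x t = grad f ((1/\<eta>) *\<^sub>R \<theta>s (t - 1))"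
    unfolding x_def ssfeta using grad_scale[OF diff assms(4)] by blast
  have vv: "\<And>v::real^'n. vln (vexp v) = v"
    by (simp add: vln_def vexp_def vec_eq_iff)
  have vpos: "\<And>v::real^'n. vexp v \<in> pos_orthant"
    by (simp add: pos_orthant_def vexp_def)
  have Hv: "\<And>v. H (vexp v) = exp (f v) *\<^sub>R grad f v"
    unfolding H_def vv f_def[symmetric] using grad_exp[OF diff] by blast
  have bij: "bij_betw H pos_orthant pos_orthant" using assms(6) .
  have inj: "inj_on H pos_orthant" using bij bij_betw_imp_inj_on by blast
  have Himg: "\<And>y. y \<in> pos_orthant \<Longrightarrow> H y \<in> pos_orthant"
    using bij bij_betwE by blast
  have gpos: "\<And>v. grad f v \<in> pos_orthant"
  proof -
    fix v
    have "H (vexp v) \<in> pos_orthant" using Himg vpos by blast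
    then have "\<forall>i. 0 < exp (f v) * grad f v $ i"
      unfolding Hv pos_orthant_def by simp
    then show "grad f v \<in> pos_orthant"
      unfolding pos_orthant_def by (simp add: zero_less_mult_iff)
  qed
  have part1: "\<forall>t\<in>{1..T}. x t \<in> pos_orthant"
    using xeq gpos by simp
  have part2: "x (t + 1) $ j = H (vexp ((1 / \<eta>) *\<^sub>R u t + \<alpha> (x t))) $ j
         / (\<Sum>i\<in>UNIV. H (vexp ((1 / \<eta>) *\<^sub>R u t + \<alpha> (x t))) $ i)"
    if t1: "1 \<le> t" for t j
  proof -
    define th where "th = (1/\<eta>) *\<^sub>R \<theta>s (t - 1)"
    define c where "c = f th"
    define y where "y = vexp (th + (- c) *\<^sub>R ones)"
    have "H y = exp (f (th + (- c) *\<^sub>R ones)) *\<^sub>R grad f (th + (- c) *\<^sub>R ones)"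
      unfolding y_def by (rule Hv)
    also have "\<dots> = x t"
      unfolding sh gsh c_def xeq th_def by simp
    finally have Hy: "H y = x t" .
    have "\<Phi> (x t) = y"
      unfolding \<Phi>_def Hy[symmetric] using the_inv_into_f_f[OF inj] vpos y_def by blast
    then have al: "\<alpha> (x t) = th + (- c) *\<^sub>R ones"
      unfolding \<alpha>_def by (simp add: vv y_def)
    have ths: "\<theta>s t = \<theta>s (t - 1) + u t"
    proof -
      obtain k where k: "t = Suc k" using t1 by (cases t) auto
      show ?thesis unfolding \<theta>s_def k by simp
    qed
    define z where "z = (1 / \<eta>) *\<^sub>R u t + \<alpha> (x t)"
    have z: "z = (1/\<eta>) *\<^sub>R \<theta>s t + (- c) *\<^sub>R ones"
      unfolding z_def al th_def ths by (simp add: algebra_simps)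
    have gz: "grad f z = x (t + 1)"
      unfolding z gsh xeq by simp
    have "(\<Sum>i\<in>UNIV. H (vexp z) $ i) = exp (f z) * (\<Sum>i\<in>UNIV. grad f z $ i)"
      unfolding Hv by (simp add: sum_distrib_left)
    also have "\<dots> = exp (f z)" using gsum by simp
    finally have sm: "(\<Sum>i\<in>UNIV. H (vexp z) $ i) = exp (f z)" .
    show ?thesis
      unfolding z_def[symmetric] sm unfolding Hv gz by simp
  qed
  show ?thesis using part1 part2 by blast
qed

end
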